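(* Let $\delta,\varepsilon\in[0,1)$, let $\mathscr{H}$ be a complex Hilbert space, let $\mathscr{A}$ be a $C^*$-algebra with $\mathbb{K}(\mathscr{H})\subseteq\mathscr{A}\subseteq\mathbb{B}(\mathscr{H})$, let $\mathscr{E},\mathscr{F}$ be inner product $\mathscr{A}$-modules, and let $e=\eta\otimes\eta$ be a minimal projection ($\eta\in\mathscr{H}$ a unit vector). Then: (i) $x,y\in\mathscr{E}_e$ are $\delta$-orthogonal in the inner product space $\mathscr{E}_e$ if and only if they are $\delta$-orthogonal in $\mathscr{E}$; (ii) if $T:\mathscr{E}\to\mathscr{F}$ is an $\mathscr{A}$-linear $(\delta,\varepsilon)$-orthogonality preserving mapping, then $T$ maps $\mathscr{E}_e$ into $\mathscr{F}_e$ and its restriction $T_e:\mathscr{E}_e\to\mathscr{F}_e$ is a linear $(\delta,\varepsilon)$-orthogonality preserving mapping between inner product spaces.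
   Context: An inner product $\mathscr{A}$-module is a right $\mathscr{A}$-module with an $\mathscr{A}$-valued inner product $\langle\cdot,\cdot\rangle$ ($\mathbb{C}$-linear and $\mathscr{A}$-linear in the second variable, $\langle x,y\rangle^*=\langle y,x\rangle$, $\langle x,x\rangle\geq0$ with equality iff $x=0$), with norm $\|x\|=\|\langle x,x\rangle\|^{1/2}$. A map is $\mathscr{A}$-linear if it is linear and $T(xa)=(Tx)a$. For $\eta,\zeta\in\mathscr{H}$, $\eta\otimes\zeta$ is the rank-one operator $\xi\mapsto(\xi,\zeta)\eta$. For a minimal projection $e=\eta\otimes\eta$, $\mathscr{E}_e=\{xe:x\in\mathscr{E}\}$ is a complex inner product space with inner product $(x,y)=\mathrm{tr}(\langle x,y\rangle)$; one has $\langle x,y\rangle=(x,y)e$ for $x,y\in\mathscr{E}_e$. In an inner product space, $x,y$ are $\delta$-orthogonal if $|(x,y)|\leq\delta\|x\|\|y\|$; in $\mathscr{E}$, if $\|\langle x,y\rangle\|\leq\delta\|x\|\|y\|$. A map is $(\delta,\varepsilon)$-orthogonality preserving if $\delta$-orthogonal pairs are mapped to $\varepsilon$-orthogonal pairs. *)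

theory Defs
  imports "HOL-Analysis.Analysis"
begin

text \<open>
  A complex Hilbert space is modelled on a type 'h with an additive group structure,
  an explicit complex scalar multiplication sc and a complex inner product ip which is
  linear in the FIRST argument and conjugate-linear in the second (the paper's convention:
  the rank-one operator eta (x) zeta maps xi to (xi,zeta) eta).
\<close>

definition hnorm :: "('h \<Rightarrow> 'h \<Rightarrow> complex) \<Rightarrow> 'h \<Rightarrow> real" where
  "hnorm ip x = sqrt (Re (ip x x))"

locale complex_hilbert_space =
  fixes sc :: "complex \<Rightarrow> 'h::ab_group_add \<Rightarrow> 'h"
    and ip :: "'h \<Rightarrow> 'h \<Rightarrow> complex"
  assumes sc_add_right: "sc c (x + y) = sc c x + sc c y"
    and sc_add_left: "sc (c + d) x = sc c x + sc d x"
    and sc_assoc: "sc c (sc d x) = sc (c * d) x"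
    and sc_one: "sc 1 x = x"
    and ip_add_left: "ip (x + y) z = ip x z + ip y z"
    and ip_sc_left: "ip (sc c x) y = c * ip x y"
    and ip_conj_sym: "ip y x = cnj (ip x y)"
    and ip_nonneg: "Re (ip x x) \<ge> 0"
    and ip_definite: "ip x x = 0 \<Longrightarrow> x = 0"
    and complete: "(\<forall>r>0. \<exists>N::nat. \<forall>m\<ge>N. \<forall>n\<ge>N. hnorm ip ((X::nat\<Rightarrow>'h) m - X n) < r)
                   \<Longrightarrow> (\<exists>L. \<forall>r>0. \<exists>N. \<forall>n\<ge>N. hnorm ip (X n - L) < r)"

definition bounded_op :: "(complex \<Rightarrow> 'h::ab_group_add \<Rightarrow> 'h) \<Rightarrow> ('h \<Rightarrow> 'h \<Rightarrow> complex) \<Rightarrow> ('h \<Rightarrow> 'h) \<Rightarrow> bool" where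
  "bounded_op sc ip T \<longleftrightarrow>
     (\<forall>x y. T (x + y) = T x + T y) \<and> (\<forall>c x. T (sc c x) = sc c (T x)) \<and>
     (\<exists>K. \<forall>x. hnorm ip (T x) \<le> K * hnorm ip x)"

definition op_norm :: "('h \<Rightarrow> 'h \<Rightarrow> complex) \<Rightarrow> ('h \<Rightarrow> 'h) \<Rightarrow> real" where
  "op_norm ip T = Sup {hnorm ip (T x) | x. hnorm ip x \<le> 1}"

definition adjoint :: "('h \<Rightarrow> 'h \<Rightarrow> complex) \<Rightarrow> ('h \<Rightarrow> 'h) \<Rightarrow> ('h \<Rightarrow> 'h)" where
  "adjoint ip T = (\<lambda>y. THE z. \<forall>x. ip (T x) y = ip x z)"

definition compact_op :: "(complex \<Rightarrow> 'h::ab_group_add \<Rightarrow> 'h) \<Rightarrow> ('h \<Rightarrow> 'h \<Rightarrow> complex) \<Rightarrow> ('h \<Rightarrow> 'h) \<Rightarrow> bool" where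
  "compact_op sc ip T \<longleftrightarrow> bounded_op sc ip T \<and>
     (\<forall>X::nat\<Rightarrow>'h. (\<exists>B. \<forall>n. hnorm ip (X n) \<le> B) \<longrightarrow>
        (\<exists>(r::nat\<Rightarrow>nat) L. strict_mono r \<and> (\<forall>\<epsilon>>0. \<exists>N. \<forall>n\<ge>N. hnorm ip (T (X (r n)) - L) < \<epsilon>)))"

definition cstar_algebra_between :: "(complex \<Rightarrow> 'h::ab_group_add \<Rightarrow> 'h) \<Rightarrow> ('h \<Rightarrow> 'h \<Rightarrow> complex) \<Rightarrow> ('h \<Rightarrow> 'h) set \<Rightarrow> bool" where
  "cstar_algebra_between sc ip A \<longleftrightarrow>
     {T. compact_op sc ip T} \<subseteq> A \<and> A \<subseteq> {T. bounded_op sc ip T} \<and>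
     (\<forall>a\<in>A. \<forall>b\<in>A. (\<lambda>x. a x + b x) \<in> A) \<and>
     (\<forall>a\<in>A. \<forall>c. (\<lambda>x. sc c (a x)) \<in> A) \<and>
     (\<forall>a\<in>A. \<forall>b\<in>A. a \<circ> b \<in> A) \<and>
     (\<forall>a\<in>A. adjoint ip a \<in> A) \<and>
     (\<forall>(X::nat\<Rightarrow>'h\<Rightarrow>'h) T. (\<forall>n. X n \<in> A) \<and> bounded_op sc ip T \<and>
            (\<lambda>n. op_norm ip (\<lambda>x. X n x - T x)) \<longlonglongrightarrow> 0 \<longrightarrow> T \<in> A)"

definition pos_op :: "('h \<Rightarrow> 'h \<Rightarrow> complex) \<Rightarrow> ('h \<Rightarrow> 'h) \<Rightarrow> bool" where
  "pos_op ip a \<longleftrightarrow> (\<forall>\<xi>. Im (ip (a \<xi>) \<xi>) = 0 \<and> Re (ip (a \<xi>) \<xi>) \<ge> 0)"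

definition inner_product_module ::
  "(complex \<Rightarrow> 'h::ab_group_add \<Rightarrow> 'h) \<Rightarrow> ('h \<Rightarrow> 'h \<Rightarrow> complex) \<Rightarrow> ('h \<Rightarrow> 'h) set \<Rightarrow>
   (complex \<Rightarrow> 'e::ab_group_add \<Rightarrow> 'e) \<Rightarrow> ('e \<Rightarrow> ('h \<Rightarrow> 'h) \<Rightarrow> 'e) \<Rightarrow> ('e \<Rightarrow> 'e \<Rightarrow> ('h \<Rightarrow> 'h)) \<Rightarrow> bool" where
  "inner_product_module sc ip A scE act ipE \<longleftrightarrow>
     \<comment> \<open>complex vector space\<close>
     (\<forall>c x y. scE c (x + y) = scE c x + scE c y) \<and>
     (\<forall>c d x. scE (c + d) x = scE c x + scE d x) \<and>
     (\<forall>c d x. scE c (scE d x) = scE (c * d) x) \<and>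
     (\<forall>x. scE 1 x = x) \<and>
     \<comment> \<open>right A-module, compatible with scalars\<close>
     (\<forall>a\<in>A. \<forall>x y. act (x + y) a = act x a + act y a) \<and>
     (\<forall>a\<in>A. \<forall>b\<in>A. \<forall>x. act x (\<lambda>\<xi>. a \<xi> + b \<xi>) = act x a + act x b) \<and>
     (\<forall>a\<in>A. \<forall>b\<in>A. \<forall>x. act x (a \<circ> b) = act (act x a) b) \<and>
     (\<forall>a\<in>A. \<forall>c x. scE c (act x a) = act (scE c x) a) \<and>
     (\<forall>a\<in>A. \<forall>c x. act x (\<lambda>\<xi>. sc c (a \<xi>)) = act (scE c x) a) \<and>
     \<comment> \<open>A-valued inner product\<close>
     (\<forall>x y. ipE x y \<in> A) \<and>
     (\<forall>x y z. ipE x (y + z) = (\<lambda>\<xi>. ipE x y \<xi> + ipE x z \<xi>)) \<and>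
     (\<forall>c x y. ipE x (scE c y) = (\<lambda>\<xi>. sc c (ipE x y \<xi>))) \<and>
     (\<forall>a\<in>A. \<forall>x y. ipE x (act y a) = ipE x y \<circ> a) \<and>
     (\<forall>x y. adjoint ip (ipE x y) = ipE y x) \<and>
     (\<forall>x. pos_op ip (ipE x x)) \<and>
     (\<forall>x. ipE x x = (\<lambda>\<xi>. 0) \<longleftrightarrow> x = 0)"

definition mod_norm :: "('h \<Rightarrow> 'h \<Rightarrow> complex) \<Rightarrow> ('e \<Rightarrow> 'e \<Rightarrow> ('h \<Rightarrow> 'h)) \<Rightarrow> 'e \<Rightarrow> real" where
  "mod_norm ip ipE x = sqrt (op_norm ip (ipE x x))"

definition rank_one :: "(complex \<Rightarrow> 'h \<Rightarrow> 'h) \<Rightarrow> ('h \<Rightarrow> 'h \<Rightarrow> complex) \<Rightarrow> 'h \<Rightarrow> 'h \<Rightarrow> ('h \<Rightarrow> 'h)" where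
  "rank_one sc ip \<eta> \<zeta> = (\<lambda>\<xi>. sc (ip \<xi> \<zeta>) \<eta>)"

definition orthonormal_basis :: "('h::zero \<Rightarrow> 'h \<Rightarrow> complex) \<Rightarrow> 'h set \<Rightarrow> bool" where
  "orthonormal_basis ip B \<longleftrightarrow>
     (\<forall>u\<in>B. ip u u = 1) \<and> (\<forall>u\<in>B. \<forall>v\<in>B. u \<noteq> v \<longrightarrow> ip u v = 0) \<and>
     (\<forall>x. (\<forall>u\<in>B. ip x u = 0) \<longrightarrow> x = 0)"

definition trace :: "('h::zero \<Rightarrow> 'h \<Rightarrow> complex) \<Rightarrow> ('h \<Rightarrow> 'h) \<Rightarrow> complex" where
  "trace ip a = infsum (\<lambda>u. ip (a u) u) (SOME B. orthonormal_basis ip B)"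

definition cut_space :: "('e \<Rightarrow> ('h \<Rightarrow> 'h) \<Rightarrow> 'e) \<Rightarrow> ('h \<Rightarrow> 'h) \<Rightarrow> 'e set" where
  "cut_space act e = {act x e | x. True}"

definition cut_ip :: "('h::zero \<Rightarrow> 'h \<Rightarrow> complex) \<Rightarrow> ('e \<Rightarrow> 'e \<Rightarrow> ('h \<Rightarrow> 'h)) \<Rightarrow> 'e \<Rightarrow> 'e \<Rightarrow> complex" where
  "cut_ip ip ipE x y = trace ip (ipE x y)"

definition cut_norm :: "('h::zero \<Rightarrow> 'h \<Rightarrow> complex) \<Rightarrow> ('e \<Rightarrow> 'e \<Rightarrow> ('h \<Rightarrow> 'h)) \<Rightarrow> 'e \<Rightarrow> real" where
  "cut_norm ip ipE x = sqrt (Re (cut_ip ip ipE x x))"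

definition space_orth :: "('h::zero \<Rightarrow> 'h \<Rightarrow> complex) \<Rightarrow> ('e \<Rightarrow> 'e \<Rightarrow> ('h \<Rightarrow> 'h)) \<Rightarrow> real \<Rightarrow> 'e \<Rightarrow> 'e \<Rightarrow> bool" where
  "space_orth ip ipE \<delta> x y \<longleftrightarrow>
     cmod (cut_ip ip ipE x y) \<le> \<delta> * cut_norm ip ipE x * cut_norm ip ipE y"

definition module_orth :: "('h \<Rightarrow> 'h \<Rightarrow> complex) \<Rightarrow> ('e \<Rightarrow> 'e \<Rightarrow> ('h \<Rightarrow> 'h)) \<Rightarrow> real \<Rightarrow> 'e \<Rightarrow> 'e \<Rightarrow> bool" where
  "module_orth ip ipE \<delta> x y \<longleftrightarrow>
     op_norm ip (ipE x y) \<le> \<delta> * mod_norm ip ipE x * mod_norm ip ipE y"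

end

theory Submission
  imports Defs "HOL-Analysis.Analysis"
begin

context complex_hilbert_space begin

lemma sc_zero_right[simp]: "sc c 0 = 0"
  using sc_add_right[of c 0 0] by simp
lemma sc_minus_right: "sc c (- x) = - sc c x"
  using sc_add_right[of c x "-x"] by (simp add: add_eq_0_iff2)
lemma sc_diff_right: "sc c (x - y) = sc c x - sc c y"
  using sc_add_right[of c x "-y"] sc_minus_right by simp
lemma sc_zero_left[simp]: "sc 0 x = 0"
  using sc_add_left[of 0 0 x] by simp
lemma sc_diff_left: "sc (c - d) x = sc c x - sc d x"
  using sc_add_left[of "c - d" d x] by (simp add: eq_diff_eq)
lemma ip_zero_left[simp]: "ip 0 z = 0"
  using ip_add_left[of 0 0 z] by simp
lemma ip_minus_left: "ip (- x) z = - ip x z"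
  using ip_add_left[of x "-x" z] by (simp add: add_eq_0_iff2)
lemma ip_diff_left: "ip (x - y) z = ip x z - ip y z"
  using ip_add_left[of x "-y" z] ip_minus_left by simp
lemma ip_add_right: "ip z (x + y) = ip z x + ip z y"
  by (metis ip_add_left ip_conj_sym complex_cnj_add)
lemma ip_diff_right: "ip z (x - y) = ip z x - ip z y"
  by (metis ip_diff_left ip_conj_sym complex_cnj_diff)
lemma ip_zero_right[simp]: "ip z 0 = 0"
  by (metis ip_zero_left ip_conj_sym complex_cnj_zero)
lemma ip_sc_right: "ip x (sc c y) = cnj c * ip x y"
  by (metis ip_sc_left ip_conj_sym complex_cnj_mult)
lemma ip_sum_left: "ip (sum f F) z = (\<Sum>u\<in>F. ip (f u) z)"
  by (induction F rule: infinite_finite_induct) (auto simp: ip_add_left)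
lemma ip_self_real: "ip x x = complex_of_real (Re (ip x x))"
  by (metis Reals_cnj_iff complex_is_Real_iff ip_conj_sym of_real_Re)
lemma ip_self_Im: "Im (ip x x) = 0"
  by (metis Im_complex_of_real ip_self_real)

lemma hnorm_sc: "hnorm ip (sc c x) = cmod c * hnorm ip x"
proof -
  have "ip (sc c x) (sc c x) = c * cnj c * ip x x" by (simp add: ip_sc_left ip_sc_right)
  also have "\<dots> = complex_of_real ((cmod c)^2 * Re (ip x x))"
    by (subst ip_self_real) (simp add: complex_norm_square[symmetric])
  finally have "Re (ip (sc c x) (sc c x)) = (cmod c)^2 * Re (ip x x)" by simp
  then show ?thesis unfolding hnorm_def by (simp add: real_sqrt_mult)
qed

lemma ip_right_unique: assumes "\<And>\<xi>. ip \<xi> z = ip \<xi> z'" shows "z = z'"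
proof -
  have "ip (z - z') (z - z') = 0" using assms by (simp add: ip_diff_right)
  then show ?thesis using ip_definite[of "z - z'"] by simp
qed

end

context complex_hilbert_space begin

lemma bessel:
  assumes F: "finite F" and n1: "\<forall>u\<in>F. ip u u = 1" and orth: "\<forall>u\<in>F. \<forall>v\<in>F. u \<noteq> v \<longrightarrow> ip u v = 0"
  shows "(\<Sum>u\<in>F. (cmod (ip \<xi> u))^2) \<le> Re (ip \<xi> \<xi>)"
proof -
  define c where "c u = ip \<xi> u" for u
  define p where "p = (\<Sum>u\<in>F. sc (c u) u)"
  define S where "S = (\<Sum>u\<in>F. (cmod (c u))^2)"
  have pv: "ip p v = c v" if "v \<in> F" for v
  proof -
    have "ip p v = (\<Sum>u\<in>F. c u * ip u v)" unfolding p_def by (simp add: ip_sum_left ip_sc_left)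
    also have "\<dots> = (\<Sum>u\<in>F. if u = v then c v else 0)"
      by (rule sum.cong) (use n1 orth that in auto)
    also have "\<dots> = c v" using F that by simp
    finally show ?thesis .
  qed
  have cc: "c u * cnj (c u) = complex_of_real ((cmod (c u))^2)" for u
    by (simp add: complex_norm_square[symmetric])
  have pp: "ip p p = complex_of_real S"
  proof -
    have g: "ip (\<Sum>u\<in>F. sc (c u) u) q = (\<Sum>u\<in>F. c u * ip u q)" for q by (simp add: ip_sum_left ip_sc_left)
    have "ip p p = (\<Sum>u\<in>F. c u * ip u p)" using g[of p] by (simp add: p_def[symmetric])
    also have "\<dots> = (\<Sum>u\<in>F. complex_of_real ((cmod (c u))^2))"
      by (rule sum.cong) (use pv cc ip_conj_sym in metis)+
    finally show ?thesis by (simp add: S_def)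
  qed
  have px: "ip p \<xi> = complex_of_real S"
  proof -
    have "ip p \<xi> = (\<Sum>u\<in>F. c u * ip u \<xi>)" unfolding p_def by (simp add: ip_sum_left ip_sc_left)
    also have "\<dots> = (\<Sum>u\<in>F. complex_of_real ((cmod (c u))^2))"
      by (rule sum.cong) (use cc ip_conj_sym c_def in metis)+
    finally show ?thesis by (simp add: S_def)
  qed
  have xp: "ip \<xi> p = complex_of_real S" using px by (metis ip_conj_sym complex_cnj_complex_of_real)
  have "ip (\<xi> - p) (\<xi> - p) = ip \<xi> \<xi> - complex_of_real S"
    by (simp add: ip_diff_left ip_diff_right pp px xp)
  then have "0 \<le> Re (ip \<xi> \<xi>) - S" using ip_nonneg[of "\<xi> - p"] by simp
  then show ?thesis by (simp add: S_def c_def)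
qed

lemma cs_unit: assumes "ip \<eta> \<eta> = 1" shows "cmod (ip \<xi> \<eta>) \<le> hnorm ip \<xi>"
proof -
  have "(\<Sum>u\<in>{\<eta>}. (cmod (ip \<xi> u))^2) \<le> Re (ip \<xi> \<xi>)"
    by (rule bessel) (use assms in auto)
  then have "(cmod (ip \<xi> \<eta>))^2 \<le> Re (ip \<xi> \<xi>)" by simp
  then show ?thesis unfolding hnorm_def by (simp add: real_le_rsqrt)
qed

lemma onb_exists: "\<exists>B. orthonormal_basis ip B"
proof -
  define OS where "OS = {B. (\<forall>u\<in>B. ip u u = 1) \<and> (\<forall>u\<in>B. \<forall>v\<in>B. u \<noteq> v \<longrightarrow> ip u v = 0)}"
  have "\<forall>C\<in>chains OS. \<Union>C \<in> OS"
  proof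
    fix C assume C: "C \<in> chains OS"
    show "\<Union>C \<in> OS" unfolding OS_def
    proof (intro CollectI conjI ballI impI)
      fix u assume "u \<in> \<Union>C"
      then obtain X where "X \<in> C" "u \<in> X" by blast
      moreover have "C \<subseteq> OS" using C unfolding chains_def by blast
      ultimately show "ip u u = 1" unfolding OS_def by blast
    next
      fix u v assume u: "u \<in> \<Union>C" and v: "v \<in> \<Union>C" and "u \<noteq> v"
      then obtain X Y where X: "X \<in> C" "u \<in> X" and Y: "Y \<in> C" "v \<in> Y" by auto
      have "X \<subseteq> Y \<or> Y \<subseteq> X" using C X Y unfolding chains_def chain_subset_def by blast
      moreover have "C \<subseteq> OS" using C unfolding chains_def by blast
      ultimately show "ip u v = 0" using X Y \<open>u \<noteq> v\<close> unfolding OS_def by blast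
    qed
  qed
  then obtain M where M: "M \<in> OS" and max: "\<forall>X\<in>OS. M \<subseteq> X \<longrightarrow> X = M" using Zorn_Lemma by blast
  have "orthonormal_basis ip M"
    unfolding orthonormal_basis_def
  proof (intro conjI allI impI)
    show "\<forall>u\<in>M. ip u u = 1" "\<forall>u\<in>M. \<forall>v\<in>M. u \<noteq> v \<longrightarrow> ip u v = 0" using M by (auto simp: OS_def)
  next
    fix x assume x: "\<forall>u\<in>M. ip x u = 0"
    show "x = 0"
    proof (rule ccontr)
      assume "x \<noteq> 0"
      then have "ip x x \<noteq> 0" using ip_definite by blast
      define n where "n = Re (ip x x)"
      have n: "ip x x = complex_of_real n" using ip_self_real[of x] unfolding n_def .
      have "n \<ge> 0" unfolding n_def by (rule ip_nonneg)
      moreover have "n \<noteq> 0" using n \<open>ip x x \<noteq> 0\<close> by auto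
      ultimately have npos: "n > 0" by simp
      define k where "k = complex_of_real (1 / sqrt n)"
      define v where "v = sc k x"
      have "ip v v = k * (cnj k * ip x x)" by (simp add: v_def ip_sc_left ip_sc_right)
      also have "\<dots> = complex_of_real ((1 / sqrt n) * (1 / sqrt n) * n)" by (simp only: k_def n complex_cnj_complex_of_real of_real_mult mult.assoc)
      also have "(1 / sqrt n) * (1 / sqrt n) * n = 1" using npos
        by (simp add: field_simps)
      finally have vv: "ip v v = 1" by simp
      have vu: "ip v u = 0" if "u \<in> M" for u using x that by (simp add: v_def ip_sc_left)
      have uv: "ip u v = 0" if "u \<in> M" for u using vu[OF that] by (metis ip_conj_sym complex_cnj_zero)
      have vM: "v \<notin> M" using vu vv by fastforce
      have "insert v M \<in> OS" using M vv vu uv by (auto simp: OS_def)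
      then have "insert v M = M" using max by blast
      then show False using vM by blast
    qed
  qed
  then show ?thesis by blast
qed

end

context complex_hilbert_space begin

lemma hnorm_unit: "ip \<eta> \<eta> = 1 \<Longrightarrow> hnorm ip \<eta> = 1"
  by (simp add: hnorm_def)

lemma e_compact:
  assumes unit: "ip \<eta> \<eta> = 1"
  shows "compact_op sc ip (rank_one sc ip \<eta> \<eta>)"
proof -
  have bo: "bounded_op sc ip (rank_one sc ip \<eta> \<eta>)"
    unfolding bounded_op_def rank_one_def
  proof (intro conjI allI exI)
    fix x y show "sc (ip (x + y) \<eta>) \<eta> = sc (ip x \<eta>) \<eta> + sc (ip y \<eta>) \<eta>"
      by (simp add: ip_add_left sc_add_left)
  next
    fix c x show "sc (ip (sc c x) \<eta>) \<eta> = sc c (sc (ip x \<eta>) \<eta>)"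
      by (simp add: ip_sc_left sc_assoc)
  next
    fix x show "hnorm ip (sc (ip x \<eta>) \<eta>) \<le> 1 * hnorm ip x"
      using cs_unit[OF unit, of x] by (simp add: hnorm_sc hnorm_unit[OF unit])
  qed
  show ?thesis unfolding compact_op_def
  proof (intro conjI bo allI impI)
    fix X :: "nat \<Rightarrow> 'h" assume "\<exists>B. \<forall>n. hnorm ip (X n) \<le> B"
    then obtain Bd where Bd: "\<And>n. hnorm ip (X n) \<le> Bd" by blast
    define f where "f n = ip (X n) \<eta>" for n
    have "bounded (range f)"
      by (rule boundedI[of _ Bd]) (use Bd cs_unit[OF unit] order_trans in \<open>fastforce simp: f_def\<close>)
    then obtain l r where r: "strict_mono (r::nat\<Rightarrow>nat)" and l: "(f \<circ> r) \<longlonglongrightarrow> l"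
      using bounded_imp_convergent_subsequence by blast
    have conv: "\<forall>\<epsilon>>0. \<exists>N. \<forall>n\<ge>N. hnorm ip (rank_one sc ip \<eta> \<eta> (X (r n)) - sc l \<eta>) < \<epsilon>"
    proof (intro allI impI)
      fix \<epsilon> :: real assume "\<epsilon> > 0"
      then obtain N where N: "\<forall>n\<ge>N. norm ((f \<circ> r) n - l) < \<epsilon>" using LIMSEQ_D[OF l] by blast
      have "hnorm ip (rank_one sc ip \<eta> \<eta> (X (r n)) - sc l \<eta>) = norm ((f \<circ> r) n - l)" for n
        by (simp add: rank_one_def f_def sc_diff_left[symmetric] hnorm_sc hnorm_unit[OF unit])
      then show "\<exists>N. \<forall>n\<ge>N. hnorm ip (rank_one sc ip \<eta> \<eta> (X (r n)) - sc l \<eta>) < \<epsilon>" using N by auto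
    qed
    show "\<exists>(r::nat\<Rightarrow>nat) L. strict_mono r \<and> (\<forall>\<epsilon>>0. \<exists>N. \<forall>n\<ge>N. hnorm ip (rank_one sc ip \<eta> \<eta> (X (r n)) - L) < \<epsilon>)"
      apply (rule exI[of _ r])
      apply (rule exI[of _ "sc l \<eta>"])
      using r conv by simp
  qed
qed

lemma ip_K_eta: "ip \<eta> \<eta> = 1 \<Longrightarrow> ip (sc (\<mu> * ip \<eta> \<eta>) \<eta>) \<eta> = \<mu>"
  by (simp add: ip_sc_left)

lemma op_norm_K:
  assumes unit: "ip \<eta> \<eta> = 1"
  shows "op_norm ip (\<lambda>\<xi>. sc (\<mu> * ip \<xi> \<eta>) \<eta>) = cmod \<mu>"
  unfolding op_norm_def
proof (rule cSup_eq_maximum)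
  show "cmod \<mu> \<in> {hnorm ip (sc (\<mu> * ip x \<eta>) \<eta>) |x. hnorm ip x \<le> 1}"
    using unit by (auto simp: hnorm_sc hnorm_unit intro!: exI[of _ \<eta>])
next
  fix y assume "y \<in> {hnorm ip (sc (\<mu> * ip x \<eta>) \<eta>) |x. hnorm ip x \<le> 1}"
  then obtain x where y: "y = cmod \<mu> * cmod (ip x \<eta>)" and x: "hnorm ip x \<le> 1"
    using unit by (auto simp: hnorm_sc hnorm_unit norm_mult)
  have "cmod (ip x \<eta>) \<le> 1" using cs_unit[OF unit, of x] x by simp
  then show "y \<le> cmod \<mu>" unfolding y by (simp add: mult_left_le)
qed

lemma trace_K:
  assumes unit: "ip \<eta> \<eta> = 1"
  shows "\<exists>t>0. \<forall>\<mu>. trace ip (\<lambda>\<xi>. sc (\<mu> * ip \<xi> \<eta>) \<eta>) = \<mu> * complex_of_real t"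
proof -
  define B where "B = (SOME B. orthonormal_basis ip B)"
  have onb: "orthonormal_basis ip B" unfolding B_def using onb_exists by (rule someI_ex)
  define g where "g u = (cmod (ip \<eta> u))^2" for u
  have sg: "g summable_on B"
  proof (rule nonneg_bdd_above_summable_on)
    show "bdd_above (sum g ` {F. F \<subseteq> B \<and> finite F})"
    proof (rule bdd_aboveI)
      fix s assume "s \<in> sum g ` {F. F \<subseteq> B \<and> finite F}"
      then obtain F where F: "F \<subseteq> B" "finite F" and s: "s = sum g F" by blast
      have "sum g F \<le> Re (ip \<eta> \<eta>)" unfolding g_def
        by (rule bessel) (use F onb in \<open>auto simp: orthonormal_basis_def subset_iff\<close>)
      then show "s \<le> 1" using s unit by simp
    qed
  qed (simp add: g_def)
  have "\<eta> \<noteq> 0" using unit by auto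
  then obtain u0 where u0: "u0 \<in> B" "ip \<eta> u0 \<noteq> 0" using onb unfolding orthonormal_basis_def by blast
  define t where "t = infsum g B"
  have "infsum g {u0} \<le> infsum g B"
    by (rule infsum_mono_neutral) (use sg u0 in \<open>auto simp: g_def\<close>)
  then have i1: "g u0 \<le> t" by (simp add: t_def)
  have "0 < g u0" using u0 by (simp add: g_def)
  then have tpos: "t > 0" using i1 by linarith
  have ht: "((\<lambda>u. complex_of_real (g u)) has_sum complex_of_real t) B"
    unfolding t_def by (rule has_sum_of_real) (use sg in simp)
  have "trace ip (\<lambda>\<xi>. sc (\<mu> * ip \<xi> \<eta>) \<eta>) = \<mu> * complex_of_real t" for \<mu>
  proof -
    have "ip (sc (\<mu> * ip u \<eta>) \<eta>) u = \<mu> * complex_of_real (g u)" for u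
    proof -
      have "ip (sc (\<mu> * ip u \<eta>) \<eta>) u = \<mu> * (ip \<eta> u * cnj (ip \<eta> u))"
        by (simp add: ip_sc_left ip_conj_sym[of u \<eta>])
      then show ?thesis unfolding g_def by (simp only: complex_norm_square)
    qed
    then have "trace ip (\<lambda>\<xi>. sc (\<mu> * ip \<xi> \<eta>) \<eta>) = infsum (\<lambda>u. \<mu> * complex_of_real (g u)) B"
      unfolding trace_def B_def[symmetric] by simp
    also have "\<dots> = \<mu> * infsum (\<lambda>u. complex_of_real (g u)) B" by (rule infsum_cmult_right')
    also have "\<dots> = \<mu> * complex_of_real t" using ht by (simp add: infsumI)
    finally show ?thesis .
  qed
  then show ?thesis using tpos by blast
qed

end

lemma cstar_facts:
  assumes "cstar_algebra_between sc ip A"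
  shows "{T. compact_op sc ip T} \<subseteq> A" "A \<subseteq> {T. bounded_op sc ip T}"
  using assms unfolding cstar_algebra_between_def by auto

lemma module_facts:
  assumes "inner_product_module sc ip A scE act ipE"
  shows "\<forall>x y. ipE x y \<in> A" "\<forall>a\<in>A. \<forall>x y. ipE x (act y a) = ipE x y \<circ> a"
    "\<forall>x y. adjoint ip (ipE x y) = ipE y x" "\<forall>x. pos_op ip (ipE x x)"
  using assms unfolding inner_product_module_def apply -
  apply (elim conjE, assumption)
  apply (elim conjE, assumption)
  apply (elim conjE, assumption)
  apply (elim conjE, assumption)
  done

lemma bounded_op_sc: "bounded_op sc ip T \<Longrightarrow> T (sc c x) = sc c (T x)"
  unfolding bounded_op_def by blast

context complex_hilbert_space begin

lemma cut_form:
  assumes A: "cstar_algebra_between sc ip A" and M: "inner_product_module sc ip A scE act ipE"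
    and unit: "ip \<eta> \<eta> = 1"
  shows "ipE (act x0 (rank_one sc ip \<eta> \<eta>)) (act y0 (rank_one sc ip \<eta> \<eta>))
       = (\<lambda>\<xi>. sc (ip \<eta> (ipE y0 x0 \<eta>) * ip \<xi> \<eta>) \<eta>)"
proof -
  let ?e = "rank_one sc ip \<eta> \<eta>"
  have eA: "?e \<in> A" using e_compact[OF unit] cstar_facts(1)[OF A] by blast
  define Bm where "Bm = ipE y0 x0"
  have BmA: "Bm \<in> A" using module_facts(1)[OF M] unfolding Bm_def by blast
  have Bsc: "Bm (sc c x) = sc c (Bm x)" for c x
    using BmA cstar_facts(2)[OF A] bounded_op_sc by blast
  have m1: "ipE x (act y a) = ipE x y \<circ> a" if "a \<in> A" for x y a
    using module_facts(2)[OF M] that by blast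
  have m2: "adjoint ip (ipE x y) = ipE y x" for x y
    using module_facts(3)[OF M] by blast
  have adj: "adjoint ip (Bm \<circ> ?e) = (\<lambda>w. sc (ip w (Bm \<eta>)) \<eta>)"
  proof
    fix w
    have P: "\<forall>\<xi>. ip ((Bm \<circ> ?e) \<xi>) w = ip \<xi> (sc (ip w (Bm \<eta>)) \<eta>)"
    proof
      fix \<xi>
      have "ip ((Bm \<circ> ?e) \<xi>) w = ip \<xi> \<eta> * ip (Bm \<eta>) w"
        by (simp add: rank_one_def Bsc ip_sc_left)
      also have "\<dots> = ip \<xi> (sc (ip w (Bm \<eta>)) \<eta>)"
        by (simp add: ip_sc_right ip_conj_sym[of w "Bm \<eta>"])
      finally show "ip ((Bm \<circ> ?e) \<xi>) w = ip \<xi> (sc (ip w (Bm \<eta>)) \<eta>)" .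
    qed
    show "adjoint ip (Bm \<circ> ?e) w = sc (ip w (Bm \<eta>)) \<eta>"
      unfolding adjoint_def
    proof (rule the_equality)
      show "\<forall>\<xi>. ip ((Bm \<circ> ?e) \<xi>) w = ip \<xi> (sc (ip w (Bm \<eta>)) \<eta>)" by (rule P)
    next
      fix z assume "\<forall>\<xi>. ip ((Bm \<circ> ?e) \<xi>) w = ip \<xi> z"
      then show "z = sc (ip w (Bm \<eta>)) \<eta>" using P by (intro ip_right_unique) metis
    qed
  qed
  have "ipE (act x0 ?e) (act y0 ?e) = ipE (act x0 ?e) y0 \<circ> ?e" by (rule m1[OF eA])
  also have "ipE (act x0 ?e) y0 = adjoint ip (ipE y0 (act x0 ?e))" by (simp add: m2)
  also have "ipE y0 (act x0 ?e) = Bm \<circ> ?e" unfolding Bm_def by (rule m1[OF eA])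
  also note adj
  finally show ?thesis
    by (simp add: fun_eq_iff rank_one_def ip_sc_left Bm_def mult.commute)
qed


lemma orth_equiv:
  assumes A: "cstar_algebra_between sc ip A" and M: "inner_product_module sc ip A scE act ipE"
    and unit: "ip \<eta> \<eta> = 1"
    and x: "x \<in> cut_space act (rank_one sc ip \<eta> \<eta>)" and y: "y \<in> cut_space act (rank_one sc ip \<eta> \<eta>)"
  shows "space_orth ip ipE \<delta> x y \<longleftrightarrow> module_orth ip ipE \<delta> x y"
proof -
  obtain t where t: "t > 0" and tr: "\<And>\<mu>. trace ip (\<lambda>\<xi>. sc (\<mu> * ip \<xi> \<eta>) \<eta>) = \<mu> * complex_of_real t"
    using trace_K[OF unit] by blast
  obtain x0 where x0: "x = act x0 (rank_one sc ip \<eta> \<eta>)" using x unfolding cut_space_def by blast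
  obtain y0 where y0: "y = act y0 (rank_one sc ip \<eta> \<eta>)" using y unfolding cut_space_def by blast
  have form: "ipE u v = (\<lambda>\<xi>. sc (ip \<eta> (ipE v0 u0 \<eta>) * ip \<xi> \<eta>) \<eta>)"
    if "u = act u0 (rank_one sc ip \<eta> \<eta>)" "v = act v0 (rank_one sc ip \<eta> \<eta>)" for u v u0 v0
    using cut_form[OF A M unit] that by blast
  have pos: "\<And>z. pos_op ip (ipE z z)" using module_facts(4)[OF M] by blast
  define mxy where "mxy = ip \<eta> (ipE y0 x0 \<eta>)"
  define mxx where "mxx = ip \<eta> (ipE x0 x0 \<eta>)"
  define myy where "myy = ip \<eta> (ipE y0 y0 \<eta>)"
  have Fxy: "ipE x y = (\<lambda>\<xi>. sc (mxy * ip \<xi> \<eta>) \<eta>)" using form[OF x0 y0] mxy_def by simp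
  have Fxx: "ipE x x = (\<lambda>\<xi>. sc (mxx * ip \<xi> \<eta>) \<eta>)" using form[OF x0 x0] mxx_def by simp
  have Fyy: "ipE y y = (\<lambda>\<xi>. sc (myy * ip \<xi> \<eta>) \<eta>)" using form[OF y0 y0] myy_def by simp
  have realpos: "m = complex_of_real (Re m) \<and> Re m \<ge> 0"
    if "pos_op ip (\<lambda>\<xi>. sc (m * ip \<xi> \<eta>) \<eta>)" for m
  proof -
    have "Im (ip (sc (m * ip \<eta> \<eta>) \<eta>) \<eta>) = 0 \<and> Re (ip (sc (m * ip \<eta> \<eta>) \<eta>) \<eta>) \<ge> 0"
      using that unfolding pos_op_def by blast
    then have "Im m = 0 \<and> Re m \<ge> 0" using unit by (simp add: ip_sc_left)
    then show ?thesis by (simp add: complex_eq_iff)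
  qed
  define a where "a = Re mxx"
  define b where "b = Re myy"
  have a: "mxx = complex_of_real a" "a \<ge> 0" using realpos[of mxx] pos[of x] unfolding Fxx a_def by auto
  have b: "myy = complex_of_real b" "b \<ge> 0" using realpos[of myy] pos[of y] unfolding Fyy b_def by auto
  have st: "sqrt t * sqrt t = t" using t by simp
  have sq: "sqrt (a * t) * sqrt (b * t) = sqrt a * sqrt b * t"
    using st by (simp add: real_sqrt_mult algebra_simps)
  have "space_orth ip ipE \<delta> x y \<longleftrightarrow> cmod mxy * t \<le> \<delta> * (sqrt (a * t) * sqrt (b * t))"
    unfolding space_orth_def cut_norm_def cut_ip_def Fxy Fxx Fyy tr a(1) b(1)
    using t by (simp add: norm_mult mult.assoc)
  also have "\<dots> \<longleftrightarrow> cmod mxy * t \<le> \<delta> * (sqrt a * sqrt b) * t" unfolding sq by (simp add: mult.assoc)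
  also have "\<dots> \<longleftrightarrow> cmod mxy \<le> \<delta> * (sqrt a * sqrt b)" using t by simp
  also have "\<dots> \<longleftrightarrow> module_orth ip ipE \<delta> x y"
    unfolding module_orth_def mod_norm_def Fxy Fxx Fyy op_norm_K[OF unit] a b
    using a b by (simp add: mult.assoc)
  finally show ?thesis .
qed

end

theorem lemma3p4:
  fixes sc :: "complex \<Rightarrow> 'h::ab_group_add \<Rightarrow> 'h" and ip :: "'h \<Rightarrow> 'h \<Rightarrow> complex"
    and A :: "('h \<Rightarrow> 'h) set"
    and scE :: "complex \<Rightarrow> 'e::ab_group_add \<Rightarrow> 'e" and actE :: "'e \<Rightarrow> ('h \<Rightarrow> 'h) \<Rightarrow> 'e"
    and ipE :: "'e \<Rightarrow> 'e \<Rightarrow> ('h \<Rightarrow> 'h)"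
    and scF :: "complex \<Rightarrow> 'f::ab_group_add \<Rightarrow> 'f" and actF :: "'f \<Rightarrow> ('h \<Rightarrow> 'h) \<Rightarrow> 'f"
    and ipF :: "'f \<Rightarrow> 'f \<Rightarrow> ('h \<Rightarrow> 'h)"
    and \<delta> \<epsilon> :: real and \<eta> :: 'h
  assumes delta: "0 \<le> \<delta>" "\<delta> < 1" and eps: "0 \<le> \<epsilon>" "\<epsilon> < 1"
    and H: "complex_hilbert_space sc ip"
    and A: "cstar_algebra_between sc ip A"
    and E: "inner_product_module sc ip A scE actE ipE"
    and F: "inner_product_module sc ip A scF actF ipF"
    and unit: "ip \<eta> \<eta> = 1"
  shows "(\<forall>x\<in>cut_space actE (rank_one sc ip \<eta> \<eta>). \<forall>y\<in>cut_space actE (rank_one sc ip \<eta> \<eta>).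
            space_orth ip ipE \<delta> x y \<longleftrightarrow> module_orth ip ipE \<delta> x y)
       \<and> (\<forall>T :: 'e \<Rightarrow> 'f.
            (\<forall>x y. T (x + y) = T x + T y) \<and> (\<forall>c x. T (scE c x) = scF c (T x)) \<and>
            (\<forall>a\<in>A. \<forall>x. T (actE x a) = actF (T x) a) \<and>
            (\<forall>x y. module_orth ip ipE \<delta> x y \<longrightarrow> module_orth ip ipF \<epsilon> (T x) (T y))
          \<longrightarrow>
            T ` cut_space actE (rank_one sc ip \<eta> \<eta>) \<subseteq> cut_space actF (rank_one sc ip \<eta> \<eta>) \<and>
            (\<forall>x\<in>cut_space actE (rank_one sc ip \<eta> \<eta>). \<forall>y\<in>cut_space actE (rank_one sc ip \<eta> \<eta>).
               T (x + y) = T x + T y) \<and>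
            (\<forall>c. \<forall>x\<in>cut_space actE (rank_one sc ip \<eta> \<eta>). T (scE c x) = scF c (T x)) \<and>
            (\<forall>x\<in>cut_space actE (rank_one sc ip \<eta> \<eta>). \<forall>y\<in>cut_space actE (rank_one sc ip \<eta> \<eta>).
               space_orth ip ipE \<delta> x y \<longrightarrow> space_orth ip ipF \<epsilon> (T x) (T y)))"
proof -
  interpret complex_hilbert_space sc ip by (rule H)
  let ?e = "rank_one sc ip \<eta> \<eta>"
  have eA: "?e \<in> A" using e_compact[OF unit] cstar_facts(1)[OF A] by blast
  have P1: "\<forall>x\<in>cut_space actE ?e. \<forall>y\<in>cut_space actE ?e.
            space_orth ip ipE \<delta> x y \<longleftrightarrow> module_orth ip ipE \<delta> x y"
    using orth_equiv[OF A E unit] by blast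
  have P2: "T ` cut_space actE ?e \<subseteq> cut_space actF ?e \<and>
            (\<forall>x\<in>cut_space actE ?e. \<forall>y\<in>cut_space actE ?e. T (x + y) = T x + T y) \<and>
            (\<forall>c. \<forall>x\<in>cut_space actE ?e. T (scE c x) = scF c (T x)) \<and>
            (\<forall>x\<in>cut_space actE ?e. \<forall>y\<in>cut_space actE ?e.
               space_orth ip ipE \<delta> x y \<longrightarrow> space_orth ip ipF \<epsilon> (T x) (T y))"
    if T: "(\<forall>x y. T (x + y) = T x + T y) \<and> (\<forall>c x. T (scE c x) = scF c (T x)) \<and>
            (\<forall>a\<in>A. \<forall>x. T (actE x a) = actF (T x) a) \<and>
            (\<forall>x y. module_orth ip ipE \<delta> x y \<longrightarrow> module_orth ip ipF \<epsilon> (T x) (T y))"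
    for T :: "'e \<Rightarrow> 'f"
  proof -
    have Tadd: "\<And>x y. T (x + y) = T x + T y" using T by blast
    have Tsc: "\<And>c x. T (scE c x) = scF c (T x)" using T by blast
    have Tact: "\<And>x. T (actE x ?e) = actF (T x) ?e" using T eA by blast
    have Torth: "\<And>x y. module_orth ip ipE \<delta> x y \<Longrightarrow> module_orth ip ipF \<epsilon> (T x) (T y)" using T by blast
    have img: "T x \<in> cut_space actF ?e" if xin: "x \<in> cut_space actE ?e" for x
    proof -
      obtain x0 where "x = actE x0 ?e" using xin unfolding cut_space_def by blast
      then have "T x = actF (T x0) ?e" using Tact by simp
      then show ?thesis unfolding cut_space_def by blast
    qed
    have orth: "space_orth ip ipF \<epsilon> (T x) (T y)"
      if "x \<in> cut_space actE ?e" "y \<in> cut_space actE ?e" "space_orth ip ipE \<delta> x y" for x y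
    proof -
      have "module_orth ip ipE \<delta> x y" using that orth_equiv[OF A E unit] by blast
      then have "module_orth ip ipF \<epsilon> (T x) (T y)" by (rule Torth)
      then show ?thesis using orth_equiv[OF A F unit] img that by blast
    qed
    show ?thesis using img orth Tadd Tsc by blast
  qed
  show ?thesis using P1 P2 by blast
qed

end
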